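(* Let $\varphi=(\mathfrak f_1,\dots,\mathfrak f_r)$ be a flag with $r>1$ and $\mathfrak g\notin\varphi$, and fix either version $B=X$ or $B=D$. Then the butterfly $B[\varphi]$ is the join of $B[\mathfrak f_1]$ and the simplex $/(\mathfrak f_2,\dots,\mathfrak f_r)/$: two closed segments joining a point of $B[\mathfrak f_1]$ to a point of $/(\mathfrak f_2,\dots,\mathfrak f_r)/$ can intersect only at their endpoints, so that the map $(x,\kappa,y)\mapsto(1-\kappa)x+\kappa y$ from the topological join $/(\mathfrak f_2,\dots,\mathfrak f_r)/ * B[\mathfrak f_1]$ onto $B[\varphi]$ is a homeomorphism.
   Context: $\mathfrak g$ is the Lie algebra of a compact Lie group with Euclidean inner product $Q$ satisfying $Q([X,Y],Z)=Q(X,[Y,Z])$; linear operators are symmetric if $Q(AX,Y)=Q(X,AY)$. For symmetric $A$ and $a\in\mathbb R$, $F_a$ is the span of eigenvectors with eigenvalue $\le a$; $A$ is filtering if $[F_a,F_b]\subseteq F_{a+b}$ for all $a,b$; $\mathfrak F_+$ is the set of filtering symmetric operators with nonnegative spectrum and trace $1$. $\mathfrak h\subsetneq\mathfrak g$ is a fixed subalgebra, $\mathcal A$ a compact group of automorphisms of $\mathfrak g$ preserving $\mathfrak h$ and $Q$. For an $\mathcal A$-invariant subalgebra $\mathfrak k$ with $\mathfrak h\subsetneq\mathfrak k\subsetneq\mathfrak g$: $\bar\chi^{\mathfrak k}=\frac{1}{\dim(\mathfrak g/\mathfrak k)}(1_{\mathfrak g}-1_{\mathfrak k})$; $D[\mathfrak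 k]$ is the set of symmetric operators with nonnegative spectrum and trace $1$ commuting with all elements of $\mathcal A$, annihilating $\mathfrak k$ and commuting with $\mathrm{ad}(X)$, $X\in\mathfrak k$; $X[\mathfrak k]=D[\mathfrak k]\cap\mathfrak F_+$. A flag is a sequence $\varphi=(\mathfrak f_1,\dots,\mathfrak f_r)$, $r\ge1$, of $\mathcal A$-invariant subalgebras with $\mathfrak g\supseteq\mathfrak f_1\supsetneq\dots\supsetneq\mathfrak f_r\supsetneq\mathfrak h$; for a flag not containing $\mathfrak g$, $/\varphi/$ is the convex hull of $\{\bar\chi^{\mathfrak f_i}\}$. Butterflies ($B=X$ or $B=D$): if $r>1$ and $\mathfrak f_1\ne\mathfrak g$, $B[\varphi]$ is the union of all closed segments joining a point of $B[\mathfrak f_1]$ to a point of $/(\mathfrak f_2,\dots,\mathfrak f_r)/$. *)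

theory Defs
  imports "HOL-Analysis.Analysis"
begin

section \<open>Compact Lie algebra g: a Euclidean space with a Lie bracket for which the inner product is ad-invariant\<close>

definition lie_bracket :: "('a::euclidean_space \<Rightarrow> 'a \<Rightarrow> 'a) \<Rightarrow> bool" where
  "lie_bracket br \<longleftrightarrow> bilinear br \<and> (\<forall>x. br x x = 0) \<and>
     (\<forall>x y z. br x (br y z) + br y (br z x) + br z (br x y) = 0)"

definition ad_invariant_inner :: "('a::euclidean_space \<Rightarrow> 'a \<Rightarrow> 'a) \<Rightarrow> bool" where
  "ad_invariant_inner br \<longleftrightarrow> (\<forall>x y z. inner (br x y) z = inner x (br y z))"

definition subalgebra :: "('a::euclidean_space \<Rightarrow> 'a \<Rightarrow> 'a) \<Rightarrow> 'a set \<Rightarrow> bool" where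
  "subalgebra br k \<longleftrightarrow> subspace k \<and> (\<forall>x\<in>k. \<forall>y\<in>k. br x y \<in> k)"

definition symmetric_op :: "('a::euclidean_space \<Rightarrow>\<^sub>L 'a) \<Rightarrow> bool" where
  "symmetric_op A \<longleftrightarrow> (\<forall>x y. inner (blinfun_apply A x) y = inner x (blinfun_apply A y))"

definition Fsub :: "('a::euclidean_space \<Rightarrow>\<^sub>L 'a) \<Rightarrow> real \<Rightarrow> 'a set" where
  "Fsub A a = span {v. v \<noteq> 0 \<and> (\<exists>l. l \<le> a \<and> blinfun_apply A v = l *\<^sub>R v)}"

definition filtering :: "('a::euclidean_space \<Rightarrow> 'a \<Rightarrow> 'a) \<Rightarrow> ('a \<Rightarrow>\<^sub>L 'a) \<Rightarrow> bool" where
  "filtering br A \<longleftrightarrow> (\<forall>a b. \<forall>x\<in>Fsub A a. \<forall>y\<in>Fsub A b. br x y \<in> Fsub A (a + b))"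

definition nonneg_spectrum :: "('a::euclidean_space \<Rightarrow>\<^sub>L 'a) \<Rightarrow> bool" where
  "nonneg_spectrum A \<longleftrightarrow> (\<forall>v l. v \<noteq> 0 \<and> blinfun_apply A v = l *\<^sub>R v \<longrightarrow> 0 \<le> l)"

definition op_trace :: "('a::euclidean_space \<Rightarrow>\<^sub>L 'a) \<Rightarrow> real" where
  "op_trace A = (\<Sum>b\<in>Basis. inner (blinfun_apply A b) b)"

definition Fplus :: "('a::euclidean_space \<Rightarrow> 'a \<Rightarrow> 'a) \<Rightarrow> ('a \<Rightarrow>\<^sub>L 'a) set" where
  "Fplus br = {A. symmetric_op A \<and> filtering br A \<and> nonneg_spectrum A \<and> op_trace A = 1}"

definition aut_group :: "('a::euclidean_space \<Rightarrow> 'a \<Rightarrow> 'a) \<Rightarrow> ('a \<Rightarrow>\<^sub>L 'a) set \<Rightarrow> 'a set \<Rightarrow> bool" where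
  "aut_group br AA h \<longleftrightarrow> compact AA \<and> id_blinfun \<in> AA \<and>
     (\<forall>f\<in>AA. \<forall>g\<in>AA. f o\<^sub>L g \<in> AA) \<and>
     (\<forall>f\<in>AA. \<exists>g\<in>AA. f o\<^sub>L g = id_blinfun \<and> g o\<^sub>L f = id_blinfun) \<and>
     (\<forall>f\<in>AA. (\<forall>x y. blinfun_apply f (br x y) = br (blinfun_apply f x) (blinfun_apply f y)) \<and>
               (\<forall>x y. inner (blinfun_apply f x) (blinfun_apply f y) = inner x y) \<and>
               blinfun_apply f ` h = h)"

definition AA_invariant :: "('a::euclidean_space \<Rightarrow>\<^sub>L 'a) set \<Rightarrow> 'a set \<Rightarrow> bool" where
  "AA_invariant AA k \<longleftrightarrow> (\<forall>f\<in>AA. blinfun_apply f ` k \<subseteq> k)"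

definition orth_proj :: "'a::euclidean_space set \<Rightarrow> 'a \<Rightarrow> 'a" where
  "orth_proj k x = (THE y. y \<in> k \<and> (\<forall>z\<in>k. inner (x - y) z = 0))"

definition chibar :: "'a::euclidean_space set \<Rightarrow> ('a \<Rightarrow>\<^sub>L 'a)" where
  "chibar k = Blinfun (\<lambda>x. (1 / (real DIM('a) - real (dim k))) *\<^sub>R (x - orth_proj k x))"

definition Dset :: "('a::euclidean_space \<Rightarrow> 'a \<Rightarrow> 'a) \<Rightarrow> ('a \<Rightarrow>\<^sub>L 'a) set \<Rightarrow> 'a set \<Rightarrow> ('a \<Rightarrow>\<^sub>L 'a) set" where
  "Dset br AA k = {A. symmetric_op A \<and> nonneg_spectrum A \<and> op_trace A = 1 \<and>
      (\<forall>f\<in>AA. A o\<^sub>L f = f o\<^sub>L A) \<and>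
      (\<forall>x\<in>k. blinfun_apply A x = 0) \<and>
      (\<forall>X\<in>k. \<forall>Y. blinfun_apply A (br X Y) = br X (blinfun_apply A Y))}"

definition Xset :: "('a::euclidean_space \<Rightarrow> 'a \<Rightarrow> 'a) \<Rightarrow> ('a \<Rightarrow>\<^sub>L 'a) set \<Rightarrow> 'a set \<Rightarrow> ('a \<Rightarrow>\<^sub>L 'a) set" where
  "Xset br AA k = Dset br AA k \<inter> Fplus br"

definition is_flag :: "('a::euclidean_space \<Rightarrow> 'a \<Rightarrow> 'a) \<Rightarrow> ('a \<Rightarrow>\<^sub>L 'a) set \<Rightarrow> 'a set \<Rightarrow> 'a set list \<Rightarrow> bool" where
  "is_flag br AA h fs \<longleftrightarrow> fs \<noteq> [] \<and>
     (\<forall>k\<in>set fs. subalgebra br k \<and> AA_invariant AA k \<and> h \<subset> k) \<and>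
     sorted_wrt (\<lambda>a b. b \<subset> a) fs"

definition flag_simplex :: "'a::euclidean_space set list \<Rightarrow> ('a \<Rightarrow>\<^sub>L 'a) set" where
  "flag_simplex fs = convex hull (chibar ` set fs)"

text \<open>Butterfly B[phi], for a choice Bf of B (Bf = Xset br AA or Bf = Dset br AA).\<close>
definition butterfly :: "('a::euclidean_space set \<Rightarrow> ('a \<Rightarrow>\<^sub>L 'a) set) \<Rightarrow> 'a set list \<Rightarrow> ('a \<Rightarrow>\<^sub>L 'a) set" where
  "butterfly Bf fs = \<Union>{closed_segment x y | x y. x \<in> Bf (hd fs) \<and> y \<in> flag_simplex (tl fs)}"

definition quotient_topology :: "'a topology \<Rightarrow> ('a \<times> 'a) set \<Rightarrow> 'a set topology" where
  "quotient_topology X R = topology (\<lambda>U. U \<subseteq> topspace X // R \<and> openin X (\<Union>U))"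

text \<open>Points (x, kappa, y) of S x [0,1] x T; at kappa = 0 the y-coordinate is collapsed,
  at kappa = 1 the x-coordinate is collapsed.\<close>
definition join_rel :: "'b::topological_space set \<Rightarrow> 'c::topological_space set \<Rightarrow> (('b \<times> real \<times> 'c) \<times> ('b \<times> real \<times> 'c)) set" where
  "join_rel S T = {((x, t, y), (x', t', y')).
      (x, t, y) \<in> S \<times> {0..1} \<times> T \<and> (x', t', y') \<in> S \<times> {0..1} \<times> T \<and>
      ((x, t, y) = (x', t', y') \<or> (t = 0 \<and> t' = 0 \<and> x = x') \<or> (t = 1 \<and> t' = 1 \<and> y = y'))}"

definition join_topology :: "'b::topological_space set \<Rightarrow> 'c::topological_space set \<Rightarrow> ('b \<times> real \<times> 'c) set topology" where
  "join_topology S T = quotient_topology (top_of_set (S \<times> {0..1} \<times> T)) (join_rel S T)"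

definition join_map :: "('b::real_vector \<times> real \<times> 'b) \<Rightarrow> 'b" where
  "join_map p = (case p of (x, t, y) \<Rightarrow> (1 - t) *\<^sub>R x + t *\<^sub>R y)"

end

theory Submission
  imports Defs
begin

lemma sym_inner: "symmetric_op A \<Longrightarrow> inner (blinfun_apply A x) y = inner x (blinfun_apply A y)"
  by (simp add: symmetric_op_def)

lemma min_is_eig:
  fixes A :: "'a::euclidean_space \<Rightarrow>\<^sub>L 'a"
  assumes sym: "symmetric_op A" and S: "subspace S" and inv: "\<And>x. x \<in> S \<Longrightarrow> A x \<in> S"
    and v: "v \<in> S" "norm v = 1"
    and mn: "\<And>x. x \<in> S \<Longrightarrow> norm x = 1 \<Longrightarrow> inner (A v) v \<le> inner (A x) x"
  shows "A v = inner (A v) v *\<^sub>R v"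
proof -
  define m where "m = inner (A v) v"
  have key: "inner (A v) w = 0" if w: "w \<in> S" "inner w v = 0" for w
  proof -
    define c where "c = inner (A v) w"
    define D where "D = inner (A w) w - m * inner w w"
    have ineq: "0 \<le> 2 * s * c + s^2 * D" for s :: real
    proof -
      define x where "x = v + s *\<^sub>R w"
      have nx: "inner x x = 1 + s^2 * inner w w"
        using v w by (simp add: x_def inner_add_left inner_add_right power2_eq_square inner_commute norm_eq_1)
      hence xpos: "norm x > 0" 
        by (smt (verit) inner_eq_zero_iff inner_ge_zero mult_nonneg_nonneg norm_le_zero_iff zero_le_power2)
      have xS: "(1 / norm x) *\<^sub>R x \<in> S" using S v w by (simp add: x_def subspace_add subspace_scale)
      have "inner (A v) v \<le> inner (A ((1 / norm x) *\<^sub>R x)) ((1 / norm x) *\<^sub>R x)"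
        using mn[OF xS] xpos by simp
      also have "\<dots> = inner (A x) x / (norm x)^2"
        by (simp add: blinfun.scaleR_right power2_eq_square)
      finally have "m * (norm x)^2 \<le> inner (A x) x" using xpos
        by (simp add: m_def pos_le_divide_eq)
      hence "m * inner x x \<le> inner (A x) x" by (simp add: power2_norm_eq_inner)
      moreover have "inner (A x) x = m + 2 * s * c + s^2 * inner (A w) w"
        using sym_inner[OF sym, of v w] 
        by (simp add: x_def blinfun.add_right blinfun.scaleR_right inner_add_left inner_add_right m_def c_def
             power2_eq_square algebra_simps inner_commute)
      ultimately show ?thesis using nx by (simp add: D_def algebra_simps)
    qed
    show ?thesis
    proof (rule ccontr)
      assume "inner (A v) w \<noteq> 0"
      hence c0: "c \<noteq> 0" by (simp add: c_def)
      define q where "q = \<bar>D\<bar> + 1"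
      have q1: "q \<ge> 1" "D \<le> q" by (auto simp: q_def)
      define s where "s = - c / q"
      have "0 \<le> 2 * s * c + s^2 * D" by (rule ineq)
      hence "0 \<le> q^2 * (2 * s * c + s^2 * D)" using q1 by simp
      also have "q^2 * (2 * s * c + s^2 * D) = -2*c^2*q + c^2*D"
        using q1 by (simp add: s_def power2_eq_square algebra_simps)
      also have "\<dots> < 0"
      proof -
        have "c^2 > 0" using c0 by simp
        hence "c^2 * D \<le> c^2 * q" using q1 by simp
        moreover have "c^2 * q > 0" using \<open>c^2 > 0\<close> q1 by simp
        ultimately show ?thesis by linarith
      qed
      finally show False by simp
    qed
  qed
  define r where "r = A v - m *\<^sub>R v"
  have rS: "r \<in> S" using S v inv by (simp add: r_def subspace_diff subspace_scale)
  have rv: "inner r v = 0" using v by (simp add: r_def m_def inner_diff_left norm_eq_1)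
  have "inner (A v) r = 0" by (rule key[OF rS rv])
  hence "inner r r = 0" using rv by (simp add: r_def inner_diff_left inner_commute)
  thus ?thesis by (simp add: r_def m_def)
qed

lemma spectral_sub:
  fixes A :: "'a::euclidean_space \<Rightarrow>\<^sub>L 'a"
  assumes sym: "symmetric_op A"
  shows "subspace S \<Longrightarrow> (\<forall>x\<in>S. A x \<in> S) \<Longrightarrow> \<exists>E lam. finite E \<and> E \<subseteq> S \<and>
      (\<forall>e\<in>E. norm e = 1 \<and> A e = lam e *\<^sub>R e) \<and> (\<forall>e\<in>E. \<forall>e'\<in>E. e \<noteq> e' \<longrightarrow> inner e e' = 0) \<and>
      (\<forall>x\<in>S. (\<Sum>e\<in>E. inner x e *\<^sub>R e) = x)"
proof (induction "dim S" arbitrary: S rule: less_induct)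
  case less
  show ?case
  proof (cases "S \<subseteq> {0}")
    case True
    thus ?thesis by (intro exI[of _ "{}"]) auto
  next
    case False
    then obtain y where y: "y \<in> S" "y \<noteq> 0" by auto
    define K where "K = S \<inter> sphere 0 1"
    have "(1 / norm y) *\<^sub>R y \<in> K" using y less.prems by (simp add: K_def subspace_scale)
    hence Kne: "K \<noteq> {}" by auto
    have Kc: "compact K" unfolding K_def
      using closed_subspace[OF less.prems(1)] by (intro closed_Int_compact compact_sphere)
    have "continuous_on K (\<lambda>x. inner (A x) x)" by (intro continuous_intros)
    then obtain v where v: "v \<in> K" and vmin: "\<And>x. x \<in> K \<Longrightarrow> inner (A v) v \<le> inner (A x) x"
      using continuous_attains_inf[OF Kc Kne] by blast
    have vS: "v \<in> S" and v1: "norm v = 1" using v by (auto simp: K_def)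
    define m where "m = inner (A v) v"
    have Av: "A v = m *\<^sub>R v" unfolding m_def
      by (rule min_is_eig[OF sym less.prems(1) _ vS v1]) (use less.prems vmin in \<open>auto simp: K_def\<close>)
    define S' where "S' = {x\<in>S. inner x v = 0}"
    have sub': "subspace S'" using less.prems(1)
      by (auto simp: S'_def subspace_def inner_add_left)
    have inv': "\<forall>x\<in>S'. A x \<in> S'"
    proof
      fix x assume "x \<in> S'"
      thus "A x \<in> S'" using less.prems sym_inner[OF sym, of x v] Av by (auto simp: S'_def)
    qed
    have "v \<notin> S'" using v1 by (auto simp: S'_def inner_eq_zero_iff)
    moreover have "S' \<subseteq> S" by (auto simp: S'_def)
    ultimately have "S' \<subset> S" using vS by blast
    hence "span S' \<subset> span S" using sub' less.prems(1) by (metis span_eq_iff)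
    hence "dim S' < dim S" by (rule dim_psubset)
    from less.hyps[OF this sub' inv'] obtain E lam where E: "finite E" "E \<subseteq> S'"
      "\<forall>e\<in>E. norm e = 1 \<and> A e = lam e *\<^sub>R e" "\<forall>e\<in>E. \<forall>e'\<in>E. e \<noteq> e' \<longrightarrow> inner e e' = 0"
      "\<forall>x\<in>S'. (\<Sum>e\<in>E. inner x e *\<^sub>R e) = x" by blast
    have vE: "v \<notin> E" using \<open>v \<notin> S'\<close> E(2) by auto
    have Ev: "\<And>e. e \<in> E \<Longrightarrow> inner e v = 0" using E(2) by (auto simp: S'_def)
    have c1: "finite (insert v E)" using E by simp
    have c2: "insert v E \<subseteq> S" using E(2) vS by (auto simp: S'_def)
    have c3: "\<forall>e\<in>insert v E. norm e = 1 \<and> A e = (lam(v := m)) e *\<^sub>R e" using E(3) v1 Av vE by auto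
    have c4: "\<forall>e\<in>insert v E. \<forall>e'\<in>insert v E. e \<noteq> e' \<longrightarrow> inner e e' = 0"
      using E(4) Ev by (auto simp: inner_commute)
    have c5: "\<forall>x\<in>S. (\<Sum>e\<in>insert v E. inner x e *\<^sub>R e) = x"
    proof
      fix x assume xS: "x \<in> S"
      define x' where "x' = x - inner x v *\<^sub>R v"
      have "x' \<in> S'" using xS vS v1 less.prems(1)
        by (simp add: S'_def x'_def subspace_diff subspace_scale inner_diff_left norm_eq_1)
      hence "x' = (\<Sum>e\<in>E. inner x' e *\<^sub>R e)" using E(5) by metis
      also have "\<dots> = (\<Sum>e\<in>E. inner x e *\<^sub>R e)"
      proof (intro sum.cong refl)
        fix e assume "e \<in> E"
        hence "inner v e = 0" using Ev by (simp add: inner_commute)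
        thus "inner x' e *\<^sub>R e = inner x e *\<^sub>R e" by (simp add: x'_def inner_diff_left)
      qed
      finally have "x = (\<Sum>e\<in>insert v E. inner x e *\<^sub>R e)"
        using E(1) vE by (simp add: x'_def algebra_simps)
      thus "(\<Sum>e\<in>insert v E. inner x e *\<^sub>R e) = x" by simp
    qed
    show ?thesis using c1 c2 c3 c4 c5 by blast
  qed
qed

lemma spectral:
  fixes A :: "'a::euclidean_space \<Rightarrow>\<^sub>L 'a"
  assumes sym: "symmetric_op A"
  obtains E lam where "finite E" "\<And>e. e \<in> E \<Longrightarrow> norm e = 1" "\<And>e. e \<in> E \<Longrightarrow> A e = lam e *\<^sub>R e"
     "\<And>e e'. e \<in> E \<Longrightarrow> e' \<in> E \<Longrightarrow> e \<noteq> e' \<Longrightarrow> inner e e' = 0"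
     "\<And>x. (\<Sum>e\<in>E. inner x e *\<^sub>R e) = x"
proof -
  from spectral_sub[OF sym, of UNIV] obtain E lam where "finite E" "\<forall>e\<in>E. norm e = 1 \<and> A e = lam e *\<^sub>R e"
    "\<forall>e\<in>E. \<forall>e'\<in>E. e \<noteq> e' \<longrightarrow> inner e e' = 0" "\<forall>x. (\<Sum>e\<in>E. inner x e *\<^sub>R e) = x" by auto
  thus ?thesis by (intro that[of E lam]) auto
qed

definition eigsys :: "('a::euclidean_space \<Rightarrow>\<^sub>L 'a) \<Rightarrow> 'a set \<Rightarrow> ('a \<Rightarrow> real) \<Rightarrow> bool" where
  "eigsys A E lam \<longleftrightarrow> finite E \<and> (\<forall>e\<in>E. norm e = 1 \<and> A e = lam e *\<^sub>R e) \<and>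
     (\<forall>e\<in>E. \<forall>e'\<in>E. e \<noteq> e' \<longrightarrow> inner e e' = 0) \<and> (\<forall>x. (\<Sum>e\<in>E. inner x e *\<^sub>R e) = x)"

lemma eigsys_exists: "symmetric_op A \<Longrightarrow> \<exists>E lam. eigsys A E lam"
proof -
  assume sym: "symmetric_op A"
  from spectral_sub[OF sym, of UNIV] obtain E lam where "finite E" "\<forall>e\<in>E. norm e = 1 \<and> A e = lam e *\<^sub>R e"
    "\<forall>e\<in>E. \<forall>e'\<in>E. e \<noteq> e' \<longrightarrow> inner e e' = 0" "\<forall>x. (\<Sum>e\<in>E. inner x e *\<^sub>R e) = x" by auto
  hence "eigsys A E lam" unfolding eigsys_def by auto
  thus ?thesis by blast
qed

lemma eig_coord:
  assumes "eigsys A E lam" "F \<subseteq> E" "e' \<in> E"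
  shows "inner (\<Sum>e\<in>F. c e *\<^sub>R e) e' = (if e' \<in> F then c e' else 0)"
proof -
  have fin: "finite F" using assms finite_subset unfolding eigsys_def by blast
  have "inner (\<Sum>e\<in>F. c e *\<^sub>R e) e' = (\<Sum>e\<in>F. c e * inner e e')" by (simp add: inner_sum_left)
  also have "\<dots> = (\<Sum>e\<in>F. if e = e' then c e else 0)"
  proof (intro sum.cong refl)
    fix e assume "e \<in> F"
    hence "e \<in> E" using assms by auto
    thus "c e * inner e e' = (if e = e' then c e else 0)" using assms(1,3)
      unfolding eigsys_def by (auto simp: norm_eq_1)
  qed
  also have "\<dots> = (if e' \<in> F then c e' else 0)" using fin by (simp add: sum.delta')
  finally show ?thesis .
qed

lemma Fsub_orth:
  assumes "eigsys A E lam" "symmetric_op A" "x \<in> Fsub A c" "e \<in> E" "c < lam e"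
  shows "inner x e = 0"
proof -
  have Ae: "A e = lam e *\<^sub>R e" using assms unfolding eigsys_def by auto
  show ?thesis
  proof (rule span_induct[OF assms(3)[unfolded Fsub_def], where P="\<lambda>x. inner x e = 0"])
    show "subspace {x. inner x e = 0}" by (auto simp: subspace_def inner_add_left)
  next
    fix v assume "v \<in> {v. v \<noteq> 0 \<and> (\<exists>l\<le>c. A v = l *\<^sub>R v)}"
    then obtain l where l: "l \<le> c" "A v = l *\<^sub>R v" by auto
    have "lam e * inner v e = inner v (A e)" by (simp add: Ae)
    also have "\<dots> = inner (A v) e" using sym_inner[OF assms(2)] by simp
    also have "\<dots> = l * inner v e" by (simp add: l)
    finally have "(lam e - l) * inner v e = 0" by (simp add: algebra_simps)
    thus "inner v e = 0" using l assms(5) by auto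
  qed
qed

lemma Fsub_mem:
  assumes "eigsys A E lam" "\<And>e. e \<in> E \<Longrightarrow> inner x e \<noteq> 0 \<Longrightarrow> lam e \<le> c"
  shows "x \<in> Fsub A c"
proof -
  have x: "(\<Sum>e\<in>E. inner x e *\<^sub>R e) = x" using assms unfolding eigsys_def by blast
  have "(\<Sum>e\<in>E. inner x e *\<^sub>R e) \<in> Fsub A c" unfolding Fsub_def
  proof (intro span_sum)
    fix e assume e: "e \<in> E"
    show "inner x e *\<^sub>R e \<in> span {v. v \<noteq> 0 \<and> (\<exists>l\<le>c. A v = l *\<^sub>R v)}"
    proof (cases "inner x e = 0")
      case True thus ?thesis by (simp add: span_zero)
    next
      case False
      have "e \<noteq> 0" "A e = lam e *\<^sub>R e" using assms(1) e unfolding eigsys_def by auto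
      moreover have "lam e \<le> c" using assms(2)[OF e False] .
      ultimately show ?thesis by (intro span_mul span_base) auto
    qed
  qed
  thus ?thesis using x by simp
qed

lemma proj_bound:
  fixes A B :: "'a::euclidean_space \<Rightarrow>\<^sub>L 'a"
  assumes es: "eigsys B E mu" and symB: "symmetric_op B" and Au: "A u = \<alpha> *\<^sub>R u" and F: "F \<subseteq> E"
    and d: "(\<forall>e\<in>F. d \<le> mu e - \<alpha>) \<or> (\<forall>e\<in>F. d \<le> \<alpha> - mu e)"
  shows "d * norm (\<Sum>e\<in>F. inner u e *\<^sub>R e) \<le> norm (B - A) * norm u"
proof -
  define w where "w = (\<Sum>e\<in>F. inner u e *\<^sub>R e)"
  have fin: "finite F" using es F finite_subset unfolding eigsys_def by blast
  have BE: "\<And>e. e \<in> F \<Longrightarrow> B e = mu e *\<^sub>R e" using es F unfolding eigsys_def by auto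
  have Bw: "B w = (\<Sum>e\<in>F. (inner u e * mu e) *\<^sub>R e)"
    by (auto simp add: w_def blinfun.sum_right blinfun.scaleR_right BE intro!: sum.cong)
  have "inner w w = (\<Sum>e\<in>F. inner w (inner u e *\<^sub>R e))"
    by (subst (2) w_def) (simp add: inner_sum_right)
  also have "\<dots> = (\<Sum>e\<in>F. (inner u e)^2)"
  proof (intro sum.cong refl)
    fix e assume e: "e \<in> F"
    have "inner w e = inner u e" using eig_coord[OF es F, of e "\<lambda>e. inner u e"] F e by (auto simp: w_def)
    thus "inner w (inner u e *\<^sub>R e) = (inner u e)^2" by (simp add: power2_eq_square)
  qed
  finally have ww: "inner w w = (\<Sum>e\<in>F. (inner u e)^2)" .
  have uw: "inner u w = (\<Sum>e\<in>F. (inner u e)^2)"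
    unfolding w_def inner_sum_right by (simp add: power2_eq_square)
  have uBw: "inner u (B w) = (\<Sum>e\<in>F. mu e * (inner u e)^2)"
    unfolding Bw inner_sum_right by (simp add: power2_eq_square algebra_simps)
  have "inner ((B - A) u) w = inner (B u) w - \<alpha> * inner u w"
    by (simp add: blinfun.diff_left Au inner_diff_left)
  also have "inner (B u) w = inner u (B w)" using sym_inner[OF symB] by simp
  finally have eq: "inner ((B - A) u) w = (\<Sum>e\<in>F. (mu e - \<alpha>) * (inner u e)^2)"
    by (simp add: uBw uw sum_distrib_left algebra_simps sum_subtractf)
  have "d * inner w w \<le> \<bar>inner ((B - A) u) w\<bar>"
    using d
  proof
    assume h: "\<forall>e\<in>F. d \<le> mu e - \<alpha>"
    have "d * inner w w = (\<Sum>e\<in>F. d * (inner u e)^2)" by (simp add: ww sum_distrib_left)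
    also have "\<dots> \<le> (\<Sum>e\<in>F. (mu e - \<alpha>) * (inner u e)^2)"
      by (intro sum_mono mult_right_mono) (use h in auto)
    finally show ?thesis using eq by linarith
  next
    assume h: "\<forall>e\<in>F. d \<le> \<alpha> - mu e"
    have "d * inner w w = (\<Sum>e\<in>F. d * (inner u e)^2)" by (simp add: ww sum_distrib_left)
    also have "\<dots> \<le> (\<Sum>e\<in>F. (\<alpha> - mu e) * (inner u e)^2)"
      by (intro sum_mono mult_right_mono) (use h in auto)
    also have "\<dots> = - (\<Sum>e\<in>F. (mu e - \<alpha>) * (inner u e)^2)"
      by (simp add: sum_negf[symmetric] algebra_simps)
    finally show ?thesis using eq by linarith
  qed
  also have "\<dots> \<le> norm ((B - A) u) * norm w" by (rule Cauchy_Schwarz_ineq2)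
  also have "\<dots> \<le> norm (B - A) * norm u * norm w" by (intro mult_right_mono norm_blinfun) simp
  finally have "d * (norm w * norm w) \<le> norm (B - A) * norm u * norm w"
    by (simp add: power2_norm_eq_inner[symmetric] power2_eq_square)
  thus ?thesis
  proof (cases "norm w = 0")
    case True thus ?thesis by (simp add: w_def)
  next
    case False
    hence "norm w > 0" by simp
    have "(d * norm w) * norm w \<le> (norm (B - A) * norm u) * norm w" using \<open>d * (norm w * norm w) \<le> _\<close> by (simp add: mult.assoc)
    hence "d * norm w \<le> norm (B - A) * norm u" using \<open>norm w > 0\<close> by (rule mult_right_le_imp_le)
    thus ?thesis by (simp add: w_def)
  qed
qed

lemma br_bound:
  assumes K: "\<And>x y. norm (br x y) \<le> norm x * norm y * K" "0 \<le> K"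
    and "norm x \<le> a" "norm y \<le> b" "norm (z::'a::real_inner) \<le> c"
  shows "\<bar>inner (br x y) z\<bar> \<le> a * b * K * c"
proof -
  have "\<bar>inner (br x y) z\<bar> \<le> norm (br x y) * norm z" by (rule Cauchy_Schwarz_ineq2)
  also have "\<dots> \<le> (norm x * norm y * K) * c" using K assms by (intro mult_mono) auto
  also have "\<dots> \<le> (a * b * K) * c"
    using K assms by (intro mult_right_mono mult_mono) (auto intro: order_trans[OF norm_ge_zero])
  finally show ?thesis .
qed

lemma small_zero:
  fixes c M d :: real
  assumes "\<And>\<epsilon>. 0 < \<epsilon> \<Longrightarrow> \<epsilon> \<le> d \<Longrightarrow> c \<le> M * \<epsilon>" "0 < d" "0 \<le> M"
  shows "c \<le> 0"
proof (rule ccontr)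
  assume "\<not> c \<le> 0"
  hence c: "c > 0" by simp
  define \<epsilon> where "\<epsilon> = min d (c / (2 * (M + 1)))"
  have e: "0 < \<epsilon>" "\<epsilon> \<le> d" using c assms by (auto simp: \<epsilon>_def)
  have "c \<le> M * \<epsilon>" using assms(1)[OF e] .
  also have "\<dots> \<le> M * (c / (2 * (M + 1)))" using assms by (intro mult_left_mono) (auto simp: \<epsilon>_def)
  also have "\<dots> < c"
  proof -
    have "M * c \<ge> 0" using c assms by simp
    hence "M * c < 2 * (M + 1) * c" using c by (simp add: algebra_simps)
    moreover have "2 * (M + 1) > 0" using assms by simp
    ultimately show ?thesis by (simp add: pos_divide_less_eq mult.commute)
  qed
  finally show False by simp
qed

lemma split_sum_E:
  assumes "finite E"
  shows "(\<Sum>e\<in>E. f e) = (\<Sum>e\<in>{e\<in>E. P e}. f e) + (\<Sum>e\<in>{e\<in>E. \<not> P e}. f e)"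
proof -
  have "E = {e\<in>E. P e} \<union> {e\<in>E. \<not> P e}" by auto
  hence "(\<Sum>e\<in>E. f e) = (\<Sum>e\<in>{e\<in>E. P e} \<union> {e\<in>E. \<not> P e}. f e)" by simp
  also have "\<dots> = (\<Sum>e\<in>{e\<in>E. P e}. f e) + (\<Sum>e\<in>{e\<in>E. \<not> P e}. f e)"
    using assms by (intro sum.union_disjoint) auto
  finally show ?thesis .
qed

lemma core_filter:
  fixes A :: "'a::euclidean_space \<Rightarrow>\<^sub>L 'a" and br :: "'a \<Rightarrow> 'a \<Rightarrow> 'a"
  assumes bil: "bilinear br"
    and approx: "\<And>\<epsilon>. \<epsilon> > 0 \<Longrightarrow> \<exists>B. symmetric_op B \<and> filtering br B \<and> norm (B - A) < \<epsilon>"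
    and Au: "A u = \<alpha> *\<^sub>R u" and Av: "A v = \<beta> *\<^sub>R v" and Aw: "A w = \<gamma> *\<^sub>R w" and lt: "\<alpha> + \<beta> < \<gamma>"
  shows "inner (br u v) w = 0"
proof -
  obtain K where K: "\<And>x y. norm (br x y) \<le> norm x * norm y * K" "0 < K"
    using bounded_bilinear.pos_bounded[OF bilinear_conv_bounded_bilinear[THEN iffD1, OF bil]] by blast
  have bl: "\<And>x. linear (br x)" "\<And>y. linear (\<lambda>x. br x y)" using bil unfolding bilinear_def by auto
  define d where "d = (\<gamma> - \<alpha> - \<beta>) / 3"
  have d: "d > 0" using lt by (simp add: d_def)
  define M where "M = 7 * K * norm u * norm v * norm w / d"
  have M: "M \<ge> 0" using K d by (simp add: M_def)
  have "\<bar>inner (br u v) w\<bar> \<le> 0"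
  proof (rule small_zero[OF _ d M])
    fix \<epsilon> :: real assume e: "0 < \<epsilon>" "\<epsilon> \<le> d"
    obtain B where B: "symmetric_op B" "filtering br B" "norm (B - A) < \<epsilon>" using approx[OF e(1)] by blast
    obtain E mu where es: "eigsys B E mu" using eigsys_exists[OF B(1)] by blast
    have finE: "finite E" using es by (simp add: eigsys_def)
    have expand: "\<And>x. (\<Sum>e\<in>E. inner x e *\<^sub>R e) = x" using es by (simp add: eigsys_def)
    have ed: "\<epsilon> / d \<le> 1" using e d by simp
    define u1 where "u1 = (\<Sum>e\<in>{e\<in>E. mu e \<le> \<alpha> + d}. inner u e *\<^sub>R e)"
    define ru where "ru = (\<Sum>e\<in>{e\<in>E. \<not> mu e \<le> \<alpha> + d}. inner u e *\<^sub>R e)"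
    have uu: "u = u1 + ru" using split_sum_E[OF finE, of "\<lambda>e. inner u e *\<^sub>R e"] expand[of u]
      by (simp add: u1_def ru_def)
    have "d * norm ru \<le> norm (B - A) * norm u" unfolding ru_def
      by (rule proj_bound[OF es B(1) Au]) auto
    also have "\<dots> \<le> \<epsilon> * norm u" using B(3) by (intro mult_right_mono) auto
    finally have ru: "norm ru \<le> \<epsilon> / d * norm u" using d by (simp add: field_simps)
    have u1n: "norm u1 \<le> 2 * norm u"
    proof -
      have "norm u1 \<le> norm u + norm ru" using uu norm_triangle_ineq4[of u ru] by simp
      also have "norm ru \<le> norm u" using ru ed by (meson mult_left_le_one_le norm_ge_zero order_trans e(1) d less_imp_le divide_nonneg_pos)
      finally show ?thesis by simp
    qed
    have u1F: "u1 \<in> Fsub B (\<alpha> + d)"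
    proof (rule Fsub_mem[OF es])
      fix e assume "e \<in> E" "inner u1 e \<noteq> 0"
      thus "mu e \<le> \<alpha> + d" unfolding u1_def using eig_coord[OF es, of "{e\<in>E. mu e \<le> \<alpha> + d}" e]
        by (auto split: if_splits)
    qed
    define v1 where "v1 = (\<Sum>e\<in>{e\<in>E. mu e \<le> \<beta> + d}. inner v e *\<^sub>R e)"
    define rv where "rv = (\<Sum>e\<in>{e\<in>E. \<not> mu e \<le> \<beta> + d}. inner v e *\<^sub>R e)"
    have vv: "v = v1 + rv" using split_sum_E[OF finE, of "\<lambda>e. inner v e *\<^sub>R e"] expand[of v]
      by (simp add: v1_def rv_def)
    have "d * norm rv \<le> norm (B - A) * norm v" unfolding rv_def
      by (rule proj_bound[OF es B(1) Av]) auto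
    also have "\<dots> \<le> \<epsilon> * norm v" using B(3) by (intro mult_right_mono) auto
    finally have rv: "norm rv \<le> \<epsilon> / d * norm v" using d by (simp add: field_simps)
    have v1n: "norm v1 \<le> 2 * norm v"
    proof -
      have "norm v1 \<le> norm v + norm rv" using vv norm_triangle_ineq4[of v rv] by simp
      also have "norm rv \<le> norm v" using rv ed by (meson mult_left_le_one_le norm_ge_zero order_trans e(1) d less_imp_le divide_nonneg_pos)
      finally show ?thesis by simp
    qed
    have v1F: "v1 \<in> Fsub B (\<beta> + d)"
    proof (rule Fsub_mem[OF es])
      fix e assume "e \<in> E" "inner v1 e \<noteq> 0"
      thus "mu e \<le> \<beta> + d" unfolding v1_def using eig_coord[OF es, of "{e\<in>E. mu e \<le> \<beta> + d}" e]
        by (auto split: if_splits)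
    qed
    define w1 where "w1 = (\<Sum>e\<in>{e\<in>E. mu e \<le> \<gamma> - d}. inner w e *\<^sub>R e)"
    define w2 where "w2 = (\<Sum>e\<in>{e\<in>E. \<not> mu e \<le> \<gamma> - d}. inner w e *\<^sub>R e)"
    have ww: "w = w1 + w2" using split_sum_E[OF finE, of "\<lambda>e. inner w e *\<^sub>R e"] expand[of w]
      by (simp add: w1_def w2_def)
    have "d * norm w1 \<le> norm (B - A) * norm w" unfolding w1_def
      by (rule proj_bound[OF es B(1) Aw]) auto
    also have "\<dots> \<le> \<epsilon> * norm w" using B(3) by (intro mult_right_mono) auto
    finally have w1: "norm w1 \<le> \<epsilon> / d * norm w" using d by (simp add: field_simps)
    have "br u1 v1 \<in> Fsub B ((\<alpha> + d) + (\<beta> + d))" using B(2) u1F v1F unfolding filtering_def by blast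
    moreover have "(\<alpha> + d) + (\<beta> + d) = \<gamma> - d" by (simp add: d_def field_simps)
    ultimately have bF: "br u1 v1 \<in> Fsub B (\<gamma> - d)" by simp
    have w20: "inner (br u1 v1) w2 = 0"
      unfolding w2_def inner_sum_right
      by (rule sum.neutral) (auto intro: Fsub_orth[OF es B(1) bF])
    have bexp: "br u v = br u1 v1 + br u1 rv + br ru v"
      using uu vv linear_add[OF bl(1)] linear_add[OF bl(2)] by (metis add.commute add.left_commute)
    have eq: "inner (br u v) w = inner (br u1 v1) w1 + inner (br u1 rv) w + inner (br ru v) w"
    proof -
      have "inner (br u1 v1) w = inner (br u1 v1) w1" using w20 ww by (metis inner_add_right add_0_right)
      thus ?thesis by (simp add: bexp inner_add_left)
    qed
    have t1: "\<bar>inner (br u1 v1) w1\<bar> \<le> (2 * norm u) * (2 * norm v) * K * (\<epsilon> / d * norm w)"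
      by (rule br_bound[OF K(1)]) (use K u1n v1n w1 in auto)
    have t2: "\<bar>inner (br u1 rv) w\<bar> \<le> (2 * norm u) * (\<epsilon> / d * norm v) * K * norm w"
      by (rule br_bound[OF K(1)]) (use K u1n rv in auto)
    have t3: "\<bar>inner (br ru v) w\<bar> \<le> (\<epsilon> / d * norm u) * norm v * K * norm w"
      by (rule br_bound[OF K(1)]) (use K ru in auto)
    have "\<bar>inner (br u v) w\<bar> \<le> (2 * norm u) * (2 * norm v) * K * (\<epsilon> / d * norm w)
       + (2 * norm u) * (\<epsilon> / d * norm v) * K * norm w + (\<epsilon> / d * norm u) * norm v * K * norm w"
      using t1 t2 t3 eq by linarith
    also have "\<dots> = M * \<epsilon>" by (simp add: M_def field_simps)
    finally show "\<bar>inner (br u v) w\<bar> \<le> M * \<epsilon>" .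
  qed
  thus ?thesis by simp
qed

lemma closed_sym: "closed {A::'a::euclidean_space \<Rightarrow>\<^sub>L 'a. symmetric_op A}"
  unfolding symmetric_op_def
  by (intro closed_Collect_all closed_Collect_eq continuous_intros)

lemma closed_filt:
  fixes br :: "'a::euclidean_space \<Rightarrow> 'a \<Rightarrow> 'a"
  assumes bil: "bilinear br"
  shows "closed {A::'a \<Rightarrow>\<^sub>L 'a. symmetric_op A \<and> filtering br A}"
proof -
  let ?S = "{A::'a \<Rightarrow>\<^sub>L 'a. symmetric_op A \<and> filtering br A}"
  have "closure ?S \<subseteq> ?S"
  proof
    fix A assume "A \<in> closure ?S"
    hence app: "\<And>\<epsilon>. \<epsilon> > 0 \<Longrightarrow> \<exists>B\<in>?S. dist B A < \<epsilon>" by (simp add: closure_approachable)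
    have app': "\<And>\<epsilon>. \<epsilon> > 0 \<Longrightarrow> \<exists>B. symmetric_op B \<and> filtering br B \<and> norm (B - A) < \<epsilon>"
      using app by (fastforce simp: dist_norm)
    have symA: "symmetric_op A"
      using closed_approachable[OF closed_sym, of A] app by fastforce
    obtain E lam where es: "eigsys A E lam" using eigsys_exists[OF symA] by blast
    have finE: "finite E" and expand: "\<And>x. (\<Sum>e\<in>E. inner x e *\<^sub>R e) = x"
      and eig: "\<And>e. e \<in> E \<Longrightarrow> A e = lam e *\<^sub>R e" using es by (auto simp: eigsys_def)
    have "filtering br A" unfolding filtering_def
    proof (intro allI ballI)
      fix a b x y assume x: "x \<in> Fsub A a" and y: "y \<in> Fsub A b"
      show "br x y \<in> Fsub A (a + b)"
      proof (rule Fsub_mem[OF es])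
        fix w assume w: "w \<in> E" "inner (br x y) w \<noteq> 0"
        show "lam w \<le> a + b"
        proof (rule ccontr)
          assume "\<not> lam w \<le> a + b"
          hence lw: "a + b < lam w" by simp
          have "br x y = br (\<Sum>e\<in>E. inner x e *\<^sub>R e) (\<Sum>e\<in>E. inner y e *\<^sub>R e)" by (simp add: expand)
          also have "\<dots> = (\<Sum>(e, e')\<in>E \<times> E. br (inner x e *\<^sub>R e) (inner y e' *\<^sub>R e'))"
            by (rule bilinear_sum[OF bil])
          finally have "inner (br x y) w = (\<Sum>(e, e')\<in>E \<times> E. inner (br (inner x e *\<^sub>R e) (inner y e' *\<^sub>R e')) w)"
            by (simp add: inner_sum_left case_prod_unfold)
          also have "\<dots> = 0"
          proof (rule sum.neutral, clarify)
            fix e e' assume ee: "e \<in> E" "e' \<in> E"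
            show "inner (br (inner x e *\<^sub>R e) (inner y e' *\<^sub>R e')) w = 0"
            proof (cases "lam e \<le> a \<and> lam e' \<le> b")
              case True
              show ?thesis
              proof (rule core_filter[OF bil app'])
                show "A (inner x e *\<^sub>R e) = lam e *\<^sub>R (inner x e *\<^sub>R e)" using eig[OF ee(1)] by (simp add: blinfun.scaleR_right)
                show "A (inner y e' *\<^sub>R e') = lam e' *\<^sub>R (inner y e' *\<^sub>R e')" using eig[OF ee(2)] by (simp add: blinfun.scaleR_right)
                show "A w = lam w *\<^sub>R w" using eig[OF w(1)] .
                show "lam e + lam e' < lam w" using True lw by linarith
              qed auto
            next
              case False
              hence "inner x e = 0 \<or> inner y e' = 0"
                using Fsub_orth[OF es symA x ee(1)] Fsub_orth[OF es symA y ee(2)] by force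
              moreover have "br 0 z = 0" "br z 0 = 0" for z
                using bil by (auto simp: bilinear_lzero bilinear_rzero)
              ultimately show ?thesis by auto
            qed
          qed
          finally show False using w(2) by simp
        qed
      qed
    qed
    thus "A \<in> ?S" using symA by simp
  qed
  thus ?thesis by (simp add: closure_subset_eq)
qed

lemma nonneg_spec_iff:
  fixes A :: "'a::euclidean_space \<Rightarrow>\<^sub>L 'a"
  assumes sym: "symmetric_op A"
  shows "nonneg_spectrum A \<longleftrightarrow> (\<forall>v. 0 \<le> inner (A v) v)"
proof
  assume ns: "nonneg_spectrum A"
  obtain E lam where es: "eigsys A E lam" using eigsys_exists[OF sym] by blast
  have finE: "finite E" and expand: "\<And>x. (\<Sum>e\<in>E. inner x e *\<^sub>R e) = x"
    and eig: "\<And>e. e \<in> E \<Longrightarrow> A e = lam e *\<^sub>R e" and n1: "\<And>e. e \<in> E \<Longrightarrow> norm e = 1"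
    using es by (auto simp: eigsys_def)
  have lpos: "\<And>e. e \<in> E \<Longrightarrow> 0 \<le> lam e"
    using ns eig n1 unfolding nonneg_spectrum_def by (metis norm_zero zero_neq_one)
  show "\<forall>v. 0 \<le> inner (A v) v"
  proof
    fix v
    have "A v = A (\<Sum>e\<in>E. inner v e *\<^sub>R e)" by (simp add: expand)
    also have "\<dots> = (\<Sum>e\<in>E. (inner v e * lam e) *\<^sub>R e)"
      by (auto simp: blinfun.sum_right blinfun.scaleR_right eig intro!: sum.cong)
    finally have "inner (A v) v = (\<Sum>e\<in>E. lam e * (inner v e)^2)"
      by (simp add: inner_sum_left inner_sum_right power2_eq_square inner_commute algebra_simps)
    also have "\<dots> \<ge> 0" using lpos by (intro sum_nonneg mult_nonneg_nonneg) auto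
    finally show "0 \<le> inner (A v) v" .
  qed
next
  assume psd: "\<forall>v. 0 \<le> inner (A v) v"
  show "nonneg_spectrum A" unfolding nonneg_spectrum_def
  proof (intro allI impI)
    fix v l assume h: "v \<noteq> 0 \<and> A v = l *\<^sub>R v"
    have "0 \<le> inner (A v) v" using psd by blast
    also have "\<dots> = l * inner v v" using h by simp
    moreover have "0 < inner v v" using h by simp
    ultimately show "0 \<le> l" by (simp add: zero_le_mult_iff)
  qed
qed

lemma Dset_eq:
  fixes AA :: "('a::euclidean_space \<Rightarrow>\<^sub>L 'a) set"
  shows "Dset br AA k = {A. symmetric_op A} \<inter> {A::'a\<Rightarrow>\<^sub>L 'a. \<forall>v. 0 \<le> inner (A v) v} \<inter> {A::'a\<Rightarrow>\<^sub>L 'a. op_trace A = 1} \<inter>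
     (\<Inter>f\<in>AA. {A. A o\<^sub>L f = f o\<^sub>L A}) \<inter> (\<Inter>x\<in>k. {A::'a\<Rightarrow>\<^sub>L 'a. A x = 0}) \<inter>
     (\<Inter>X\<in>k. {A::'a\<Rightarrow>\<^sub>L 'a. \<forall>Y. A (br X Y) = br X (A Y)})"
  unfolding Dset_def using nonneg_spec_iff by blast

lemma closed_Dset:
  fixes AA :: "('a::euclidean_space \<Rightarrow>\<^sub>L 'a) set"
  assumes bil: "bilinear br"
  shows "closed (Dset br AA k)"
proof -
  have c1: "closed {A::'a \<Rightarrow>\<^sub>L 'a. \<forall>v. 0 \<le> inner (A v) v}"
    by (intro closed_Collect_all closed_Collect_le continuous_intros)
  have c2: "closed {A::'a \<Rightarrow>\<^sub>L 'a. op_trace A = 1}" unfolding op_trace_def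
    by (intro closed_Collect_eq continuous_intros)
  have c3: "closed {A. A o\<^sub>L f = f o\<^sub>L A}" for f :: "'a \<Rightarrow>\<^sub>L 'a"
    by (intro closed_Collect_eq continuous_intros)
  have c4: "closed {A::'a \<Rightarrow>\<^sub>L 'a. A x = 0}" for x
    by (intro closed_Collect_eq continuous_intros)
  have c5: "closed {A::'a \<Rightarrow>\<^sub>L 'a. \<forall>Y. A (br X Y) = br X (A Y)}" for X
  proof -
    have "linear (br X)" using bil unfolding bilinear_def by blast
    hence lin: "bounded_linear (br X)" by (simp add: linear_conv_bounded_linear)
    show ?thesis
      by (intro closed_Collect_all closed_Collect_eq continuous_intros bounded_linear.continuous_on[OF lin])
  qed
  show ?thesis unfolding Dset_eq
    by (intro closed_Int closed_INT closed_sym c1 c2 ballI c3 c4 c5)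
qed

lemma bounded_Dset:
  fixes AA :: "('a::euclidean_space \<Rightarrow>\<^sub>L 'a) set"
  shows "bounded (Dset br AA k)"
proof -
  have "norm A \<le> real DIM('a) * real DIM('a)" if A: "A \<in> Dset br AA k" for A
  proof -
    have sym: "symmetric_op A" and tr: "op_trace A = 1" and ns: "nonneg_spectrum A"
      using A by (auto simp: Dset_def)
    have psd: "\<And>v. 0 \<le> inner (A v) v" using nonneg_spec_iff[OF sym] ns by blast
    have diag: "inner (A b) b \<le> 1" if b: "b \<in> Basis" for b
    proof -
      have "inner (A b) b \<le> (\<Sum>b\<in>Basis. inner (A b) b)"
        by (rule member_le_sum) (use psd b in auto)
      thus ?thesis using tr by (simp add: op_trace_def)
    qed
    have ent: "\<bar>inner (A b) b'\<bar> \<le> 1" if b: "b \<in> Basis" "b' \<in> Basis" for b b'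
    proof -
      have s: "inner (A b') b = inner (A b) b'" using sym_inner[OF sym, of b' b] by (simp add: inner_commute)
      have p1: "0 \<le> inner (A (b + b')) (b + b')" by (rule psd)
      have p2: "0 \<le> inner (A (b - b')) (b - b')" by (rule psd)
      have e1: "inner (A (b + b')) (b + b') = inner (A b) b + 2 * inner (A b) b' + inner (A b') b'"
        using s by (simp add: blinfun.add_right inner_add_left inner_add_right)
      have e2: "inner (A (b - b')) (b - b') = inner (A b) b - 2 * inner (A b) b' + inner (A b') b'"
        using s by (simp add: blinfun.diff_right inner_diff_left inner_diff_right)
      show ?thesis using p1 p2 e1 e2 diag[OF b(1)] diag[OF b(2)] by linarith
    qed
    have "norm A \<le> (\<Sum>b\<in>Basis. norm (A b))" by (rule norm_blinfun_euclidean_le)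
    also have "\<dots> \<le> (\<Sum>b\<in>(Basis::'a set). real DIM('a))"
    proof (rule sum_mono)
      fix b :: 'a assume b: "b \<in> Basis"
      have "norm (A b) \<le> (\<Sum>b'\<in>Basis. \<bar>inner (A b) b'\<bar>)" by (rule norm_le_l1)
      also have "\<dots> \<le> (\<Sum>b'\<in>(Basis::'a set). 1)" by (rule sum_mono) (use ent b in auto)
      finally show "norm (A b) \<le> real DIM('a)" by simp
    qed
    finally show ?thesis by simp
  qed
  thus ?thesis unfolding bounded_iff by blast
qed

lemma compact_Dset:
  fixes AA :: "('a::euclidean_space \<Rightarrow>\<^sub>L 'a) set"
  assumes "bilinear br"
  shows "compact (Dset br AA k)"
  using bounded_Dset closed_Dset[OF assms] by (simp add: compact_eq_bounded_closed)

lemma compact_Xset: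
  fixes AA :: "('a::euclidean_space \<Rightarrow>\<^sub>L 'a) set"
  assumes "bilinear br"
  shows "compact (Xset br AA k)"
proof -
  have "Xset br AA k = Dset br AA k \<inter> {A. symmetric_op A \<and> filtering br A}"
    by (auto simp: Xset_def Fplus_def Dset_def)
  thus ?thesis using compact_Int_closed[OF compact_Dset[OF assms] closed_filt[OF assms]] by simp
qed

lemma orth_proj_prop:
  fixes k :: "'a::euclidean_space set"
  assumes "subspace k"
  shows "orth_proj k x \<in> k \<and> (\<forall>z\<in>k. inner (x - orth_proj k x) z = 0)"
proof -
  obtain y z where yz: "y \<in> span k" "\<And>w. w \<in> span k \<Longrightarrow> orthogonal z w" "x = y + z"
    using orthogonal_subspace_decomp_exists[of k x] by blast
  have P: "y \<in> k \<and> (\<forall>w\<in>k. inner (x - y) w = 0)"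
  proof -
    have sk: "span k = k" using assms by (simp add: span_eq_iff)
    have "y \<in> k" using yz(1) sk by simp
    moreover have "\<forall>w\<in>k. inner (x - y) w = 0"
    proof
      fix w assume "w \<in> k"
      hence "orthogonal z w" using yz(2) sk by simp
      thus "inner (x - y) w = 0" using yz(3) by (simp add: orthogonal_def)
    qed
    ultimately show ?thesis by blast
  qed
  have U: "y' = y" if "y' \<in> k \<and> (\<forall>w\<in>k. inner (x - y') w = 0)" for y'
  proof -
    have d: "y - y' \<in> k" using that P assms by (simp add: subspace_diff)
    have "inner (x - y') (y - y') - inner (x - y) (y - y') = 0" using that P d by simp
    hence "inner (y - y') (y - y') = 0" by (simp add: inner_diff_left inner_diff_right algebra_simps)
    thus ?thesis by simp
  qed
  have "orth_proj k x = y" unfolding orth_proj_def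
    by (rule the_equality[where P="\<lambda>y. y \<in> k \<and> (\<forall>z\<in>k. inner (x - y) z = 0)", OF P U])
  thus ?thesis using P by simp
qed

lemma orth_proj_unique:
  fixes k :: "'a::euclidean_space set"
  assumes "subspace k" "y \<in> k" "\<forall>w\<in>k. inner (x - y) w = 0"
  shows "orth_proj k x = y"
proof -
  have P: "orth_proj k x \<in> k" "\<forall>w\<in>k. inner (x - orth_proj k x) w = 0" using orth_proj_prop[OF assms(1)] by auto
  have d: "orth_proj k x - y \<in> k" using P assms by (simp add: subspace_diff)
  have "inner (x - y) (orth_proj k x - y) - inner (x - orth_proj k x) (orth_proj k x - y) = 0" using P assms d by simp
  hence "inner (orth_proj k x - y) (orth_proj k x - y) = 0" by (simp add: inner_diff_left inner_diff_right algebra_simps)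
  thus ?thesis by simp
qed

lemma orth_proj_linear:
  fixes k :: "'a::euclidean_space set"
  assumes k: "subspace k"
  shows "linear (orth_proj k)"
proof (rule linearI)
  fix x y :: 'a
  show "orth_proj k (x + y) = orth_proj k x + orth_proj k y"
    using orth_proj_prop[OF k, of x] orth_proj_prop[OF k, of y] k
    by (intro orth_proj_unique) (auto simp: subspace_add inner_diff_left inner_add_left algebra_simps)
next
  fix c :: real and x :: 'a
  show "orth_proj k (c *\<^sub>R x) = c *\<^sub>R orth_proj k x"
  proof (rule orth_proj_unique[OF k])
    show "c *\<^sub>R orth_proj k x \<in> k" using orth_proj_prop[OF k, of x] k by (simp add: subspace_scale)
    show "\<forall>w\<in>k. inner (c *\<^sub>R x - c *\<^sub>R orth_proj k x) w = 0"
      using orth_proj_prop[OF k, of x] by (simp add: scaleR_diff_right[symmetric] del: scaleR_diff_right)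
  qed
qed

lemma chibar_apply:
  fixes k :: "'a::euclidean_space set"
  assumes k: "subspace k"
  shows "blinfun_apply (chibar k) x = (1 / (real DIM('a) - real (dim k))) *\<^sub>R (x - orth_proj k x)"
proof -
  have "linear (\<lambda>x. (1 / (real DIM('a) - real (dim k))) *\<^sub>R (x - orth_proj k x))"
  proof (rule linearI)
    have L: "linear (orth_proj k)" by (rule orth_proj_linear[OF k])
    fix x y :: 'a and r :: real
    show "(1 / (real DIM('a) - real (dim k))) *\<^sub>R (x + y - orth_proj k (x + y)) =
      (1 / (real DIM('a) - real (dim k))) *\<^sub>R (x - orth_proj k x) + (1 / (real DIM('a) - real (dim k))) *\<^sub>R (y - orth_proj k y)"
      using linear_add[OF L, of x y] by (simp add: scaleR_add_right[symmetric] del: scaleR_add_right)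
    show "(1 / (real DIM('a) - real (dim k))) *\<^sub>R (r *\<^sub>R x - orth_proj k (r *\<^sub>R x)) =
      r *\<^sub>R ((1 / (real DIM('a) - real (dim k))) *\<^sub>R (x - orth_proj k x))"
      using linear_scale[OF L, of r x] by (simp add: scaleR_diff_right)
  qed
  hence "bounded_linear (\<lambda>x. (1 / (real DIM('a) - real (dim k))) *\<^sub>R (x - orth_proj k x))"
    by (simp add: linear_conv_bounded_linear)
  thus ?thesis unfolding chibar_def by (simp add: bounded_linear_Blinfun_apply)
qed

lemma dim_lt_DIM:
  fixes k :: "'a::euclidean_space set"
  assumes "subspace k" "k \<noteq> UNIV"
  shows "dim k < DIM('a)"
proof -
  have "dim k \<le> DIM('a)" using dim_subset[of k UNIV] by simp
  moreover have "span k = k" using assms(1) by (simp add: span_eq_iff)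
  hence "dim k \<noteq> DIM('a)" using assms(2) dim_eq_full[of k] by metis
  ultimately show ?thesis by simp
qed

lemma chibar_zero_iff:
  fixes k :: "'a::euclidean_space set"
  assumes k: "subspace k" "k \<noteq> UNIV"
  shows "blinfun_apply (chibar k) x = 0 \<longleftrightarrow> x \<in> k"
proof -
  have c: "1 / (real DIM('a) - real (dim k)) > 0" using dim_lt_DIM[OF k] by simp
  have "blinfun_apply (chibar k) x = 0 \<longleftrightarrow> x = orth_proj k x"
    using c by (simp add: chibar_apply[OF k(1)])
  also have "\<dots> \<longleftrightarrow> x \<in> k"
  proof
    assume "x = orth_proj k x" thus "x \<in> k" using orth_proj_prop[OF k(1), of x] by metis
  next
    assume "x \<in> k" thus "x = orth_proj k x" using orth_proj_unique[OF k(1), of x x] by simp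
  qed
  finally show ?thesis .
qed

lemma LI:
  fixes ts :: "'a::euclidean_space set list"
  shows "sorted_wrt (\<lambda>a b. b \<subset> a) ts \<Longrightarrow> (\<forall>k\<in>set ts. subspace k \<and> k \<subset> f) \<Longrightarrow> subspace f \<Longrightarrow>
    (\<forall>p\<in>f. (\<Sum>k\<in>set ts. a k *\<^sub>R blinfun_apply (chibar k) p) = 0) \<Longrightarrow> \<forall>k\<in>set ts. a k = 0"
proof (induction ts arbitrary: f)
  case Nil thus ?case by simp
next
  case (Cons k rest)
  have kr: "k \<notin> set rest" using Cons.prems(1) by auto
  have sk: "subspace k" "k \<subset> f" using Cons.prems(2) by auto
  have kU: "k \<noteq> UNIV" using sk by auto
  have rest_sub: "\<forall>k'\<in>set rest. subspace k' \<and> k' \<subset> k" using Cons.prems(1,2) by auto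
  have eq: "\<And>p. p \<in> f \<Longrightarrow> a k *\<^sub>R blinfun_apply (chibar k) p + (\<Sum>k\<in>set rest. a k *\<^sub>R blinfun_apply (chibar k) p) = 0"
    using Cons.prems(4) kr by (simp add: sum.insert)
  have "\<forall>p\<in>k. (\<Sum>k\<in>set rest. a k *\<^sub>R blinfun_apply (chibar k) p) = 0"
  proof
    fix p assume p: "p \<in> k"
    hence "p \<in> f" using sk by auto
    from eq[OF this] show "(\<Sum>k\<in>set rest. a k *\<^sub>R blinfun_apply (chibar k) p) = 0"
      using chibar_zero_iff[OF sk(1) kU, of p] p by simp
  qed
  hence rest0: "\<forall>k\<in>set rest. a k = 0"
    using Cons.IH[of k] Cons.prems(1) rest_sub sk(1) by auto
  obtain p where p: "p \<in> f" "p \<notin> k" using sk by auto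
  have "a k *\<^sub>R blinfun_apply (chibar k) p = 0" using eq[OF p(1)] rest0 by simp
  moreover have "blinfun_apply (chibar k) p \<noteq> 0" using chibar_zero_iff[OF sk(1) kU] p by simp
  ultimately have "a k = 0" by simp
  thus ?case using rest0 by simp
qed

lemma simplex_rep:
  fixes ts :: "'a::euclidean_space set list"
  assumes ts: "\<forall>k\<in>set ts. subspace k \<and> k \<noteq> UNIV" and y: "y \<in> flag_simplex ts"
  shows "\<exists>u. (\<forall>k\<in>set ts. 0 \<le> u k) \<and> sum u (set ts) = 1 \<and> y = (\<Sum>k\<in>set ts. u k *\<^sub>R chibar k)"
proof -
  have inj: "inj_on chibar (set ts)"
  proof (rule inj_onI)
    fix k k' assume kk: "k \<in> set ts" "k' \<in> set ts" "chibar k = chibar k'"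
    have "x \<in> k \<longleftrightarrow> x \<in> k'" for x
      using chibar_zero_iff[of k x] chibar_zero_iff[of k' x] ts kk by auto
    thus "k = k'" by blast
  qed
  obtain u where u: "\<forall>z\<in>chibar ` set ts. 0 \<le> u z" "sum u (chibar ` set ts) = 1"
      "(\<Sum>z\<in>chibar ` set ts. u z *\<^sub>R z) = y"
    using y unfolding flag_simplex_def by (auto simp: convex_hull_finite)
  show ?thesis
  proof (intro exI[of _ "u \<circ> chibar"] conjI)
    show "\<forall>k\<in>set ts. 0 \<le> (u \<circ> chibar) k" using u(1) by auto
    show "sum (u \<circ> chibar) (set ts) = 1" using u(2) sum.reindex[OF inj, of u] by simp
    show "y = (\<Sum>k\<in>set ts. (u \<circ> chibar) k *\<^sub>R chibar k)"
      using u(3) sum.reindex[OF inj, of "\<lambda>z. u z *\<^sub>R z"] by (simp add: o_def)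
  qed
qed

lemma join_key:
  fixes x x' y y' :: "'a::euclidean_space \<Rightarrow>\<^sub>L 'a" and ts :: "'a set list"
  assumes srt: "sorted_wrt (\<lambda>a b. b \<subset> a) ts" and ts: "\<forall>k\<in>set ts. subspace k \<and> k \<subset> f"
    and f: "subspace f"
    and x0: "\<forall>p\<in>f. x p = 0" and x'0: "\<forall>p\<in>f. x' p = 0"
    and y: "y \<in> flag_simplex ts" and y': "y' \<in> flag_simplex ts"
    and eq: "(1 - t) *\<^sub>R x + t *\<^sub>R y = (1 - s) *\<^sub>R x' + s *\<^sub>R y'"
  shows "t = s \<and> (t \<noteq> 0 \<longrightarrow> y = y') \<and> (t \<noteq> 1 \<longrightarrow> x = x')"
proof -
  have ts': "\<forall>k\<in>set ts. subspace k \<and> k \<noteq> UNIV" using ts by auto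
  obtain u where u: "\<forall>k\<in>set ts. 0 \<le> u k" "sum u (set ts) = 1" "y = (\<Sum>k\<in>set ts. u k *\<^sub>R chibar k)"
    using simplex_rep[OF ts' y] by blast
  obtain u' where u': "\<forall>k\<in>set ts. 0 \<le> u' k" "sum u' (set ts) = 1" "y' = (\<Sum>k\<in>set ts. u' k *\<^sub>R chibar k)"
    using simplex_rep[OF ts' y'] by blast
  have "\<forall>p\<in>f. (\<Sum>k\<in>set ts. (t * u k - s * u' k) *\<^sub>R blinfun_apply (chibar k) p) = 0"
  proof
    fix p assume p: "p \<in> f"
    have "blinfun_apply ((1 - t) *\<^sub>R x + t *\<^sub>R y) p = blinfun_apply ((1 - s) *\<^sub>R x' + s *\<^sub>R y') p"
      using eq by simp
    hence "t *\<^sub>R y p = s *\<^sub>R y' p" using x0 x'0 p by (simp add: blinfun.add_left blinfun.scaleR_left)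
    hence "(\<Sum>k\<in>set ts. (t * u k) *\<^sub>R blinfun_apply (chibar k) p) = (\<Sum>k\<in>set ts. (s * u' k) *\<^sub>R blinfun_apply (chibar k) p)"
      by (simp add: u(3) u'(3) blinfun.sum_left blinfun.scaleR_left scaleR_sum_right)
    thus "(\<Sum>k\<in>set ts. (t * u k - s * u' k) *\<^sub>R blinfun_apply (chibar k) p) = 0"
      by (simp add: scaleR_diff_left sum_subtractf)
  qed
  hence "\<forall>k\<in>set ts. t * u k - s * u' k = 0" by (rule LI[OF srt ts f, of "\<lambda>k. t * u k - s * u' k"])
  hence tu: "\<forall>k\<in>set ts. t * u k = s * u' k" by simp
  have ts_eq: "t = s"
  proof -
    have "t = t * sum u (set ts)" using u(2) by simp
    also have "\<dots> = (\<Sum>k\<in>set ts. t * u k)" by (simp add: sum_distrib_left)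
    also have "\<dots> = (\<Sum>k\<in>set ts. s * u' k)" using tu by simp
    also have "\<dots> = s" using u'(2) by (simp add: sum_distrib_left[symmetric])
    finally show ?thesis .
  qed
  have yy: "y = y'" if "t \<noteq> 0"
  proof -
    have "\<forall>k\<in>set ts. u k = u' k" using tu ts_eq that by simp
    thus ?thesis using u(3) u'(3) by simp
  qed
  have xx: "x = x'" if t1: "t \<noteq> 1"
  proof (cases "t = 0")
    case True thus ?thesis using eq ts_eq by simp
  next
    case False
    hence "y = y'" by (rule yy)
    hence "(1 - t) *\<^sub>R x = (1 - t) *\<^sub>R x'" using eq ts_eq by simp
    thus ?thesis using t1 by simp
  qed
  show ?thesis using ts_eq yy xx by blast
qed

lemma qt_istop:
  assumes eqv: "equiv (topspace X) R"
  shows "istopology (\<lambda>U. U \<subseteq> topspace X // R \<and> openin X (\<Union>U))"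
  unfolding istopology_def
proof (rule conjI; intro allI impI)
  fix U V assume U: "U \<subseteq> topspace X // R \<and> openin X (\<Union>U)" and V: "V \<subseteq> topspace X // R \<and> openin X (\<Union>V)"
  have "\<Union>(U \<inter> V) = \<Union>U \<inter> \<Union>V"
  proof
    show "\<Union>(U \<inter> V) \<subseteq> \<Union>U \<inter> \<Union>V" by auto
    show "\<Union>U \<inter> \<Union>V \<subseteq> \<Union>(U \<inter> V)"
    proof
      fix a assume "a \<in> \<Union>U \<inter> \<Union>V"
      then obtain A B where AB: "A \<in> U" "B \<in> V" "a \<in> A" "a \<in> B" by auto
      have "A = B \<or> A \<inter> B = {}" using quotient_disj[OF eqv] AB U V by blast
      hence "A = B" using AB by auto
      thus "a \<in> \<Union>(U \<inter> V)" using AB by auto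
    qed
  qed
  thus "U \<inter> V \<subseteq> topspace X // R \<and> openin X (\<Union>(U \<inter> V))" using U V by auto
next
  fix K assume K: "\<forall>U\<in>K. U \<subseteq> topspace X // R \<and> openin X (\<Union>U)"
  have "\<Union>(\<Union>K) = \<Union>(Union ` K)" by auto
  moreover have "openin X (\<Union>(Union ` K))" using K by (intro openin_Union) auto
  ultimately show "\<Union>K \<subseteq> topspace X // R \<and> openin X (\<Union>(\<Union>K))" using K by auto
qed

lemma qt_open:
  assumes eqv: "equiv (topspace X) R"
  shows "openin (quotient_topology X R) U \<longleftrightarrow> U \<subseteq> topspace X // R \<and> openin X (\<Union>U)"
  unfolding quotient_topology_def using qt_istop[OF eqv] by simp

lemma qt_topspace:
  assumes eqv: "equiv (topspace X) R"
  shows "topspace (quotient_topology X R) = topspace X // R"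
proof
  show "topspace (quotient_topology X R) \<subseteq> topspace X // R"
  proof -
    have "topspace (quotient_topology X R) = \<Union>{U. openin (quotient_topology X R) U}" by (rule topspace_def)
    also have "\<dots> \<subseteq> topspace X // R" using qt_open[OF eqv] by auto
    finally show ?thesis .
  qed
  have "openin (quotient_topology X R) (topspace X // R)"
    using qt_open[OF eqv] Union_quotient[OF eqv] by simp
  thus "topspace X // R \<subseteq> topspace (quotient_topology X R)" by (rule openin_subset)
qed

lemma qt_class_eq:
  assumes eqv: "equiv (topspace X) R" and c: "c \<in> topspace X // R" and a: "a \<in> c"
  shows "c = R``{a}" "a \<in> topspace X"
proof -
  obtain b where b: "c = R``{b}" "b \<in> topspace X" using c by (rule quotientE)
  have "(b, a) \<in> R" using a b by simp
  thus "c = R``{a}" using b equiv_class_eq_iff[OF eqv] by metis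
  show "a \<in> topspace X" using \<open>(b, a) \<in> R\<close> eqv unfolding equiv_def refl_on_def by auto
qed

lemma qt_compact:
  assumes eqv: "equiv (topspace X) R" and cpt: "compact_space X"
  shows "compact_space (quotient_topology X R)"
proof -
  have cont: "continuous_map X (quotient_topology X R) (\<lambda>a. R``{a})"
    unfolding continuous_map_def
  proof (intro conjI allI impI)
    show "(\<lambda>a. R``{a}) \<in> topspace X \<rightarrow> topspace (quotient_topology X R)"
      using qt_topspace[OF eqv] by (auto intro: quotientI)
  next
    fix U assume U: "openin (quotient_topology X R) U"
    hence U': "U \<subseteq> topspace X // R" "openin X (\<Union>U)" using qt_open[OF eqv] by auto
    have "{a \<in> topspace X. R``{a} \<in> U} = \<Union>U"
    proof
      show "{a \<in> topspace X. R``{a} \<in> U} \<subseteq> \<Union>U" using equiv_class_self[OF eqv] by blast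
      show "\<Union>U \<subseteq> {a \<in> topspace X. R``{a} \<in> U}"
      proof
        fix a assume "a \<in> \<Union>U"
        then obtain c where "c \<in> U" "a \<in> c" by auto
        thus "a \<in> {a \<in> topspace X. R``{a} \<in> U}" using qt_class_eq[OF eqv, of c a] U'(1) by auto
      qed
    qed
    thus "openin X {a \<in> topspace X. R``{a} \<in> U}" using U' by simp
  qed
  have "compactin (quotient_topology X R) ((\<lambda>a. R``{a}) ` topspace X)"
    using image_compactin[OF _ cont] cpt by (simp add: compact_space_def)
  moreover have "(\<lambda>a. R``{a}) ` topspace X = topspace (quotient_topology X R)"
    using qt_topspace[OF eqv] by (auto simp: quotient_def)
  ultimately show ?thesis by (simp add: compact_space_def)
qed

lemma qt_univ:
  assumes eqv: "equiv (topspace X) R" and g: "continuous_map X Y g"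
    and cst: "\<And>a b. (a, b) \<in> R \<Longrightarrow> g a = g b"
  shows "continuous_map (quotient_topology X R) Y (\<lambda>c. the_elem (g ` c))"
proof -
  have val: "the_elem (g ` c) = g a" if "c \<in> topspace X // R" "a \<in> c" for c a
  proof -
    have "c = R``{a}" using qt_class_eq[OF eqv that] by simp
    have "g ` c = {g a}"
    proof
      show "g ` c \<subseteq> {g a}"
      proof
        fix z assume "z \<in> g ` c"
        then obtain b where b: "b \<in> c" "z = g b" by blast
        have "(a, b) \<in> R" using b(1) \<open>c = R``{a}\<close> by simp
        from cst[OF this] show "z \<in> {g a}" using b(2) by simp
      qed
      show "{g a} \<subseteq> g ` c" using that(2) by blast
    qed
    thus ?thesis by simp
  qed
  show ?thesis unfolding continuous_map_def
  proof (intro conjI allI impI)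
    show "(\<lambda>c. the_elem (g ` c)) \<in> topspace (quotient_topology X R) \<rightarrow> topspace Y"
    proof
      fix c assume "c \<in> topspace (quotient_topology X R)"
      hence c: "c \<in> topspace X // R" using qt_topspace[OF eqv] by simp
      then obtain a where a: "c = R``{a}" "a \<in> topspace X" by (rule quotientE)
      have "a \<in> c" using a equiv_class_self[OF eqv] by simp
      hence "the_elem (g ` c) = g a" by (rule val[OF c])
      moreover have "g a \<in> topspace Y" using continuous_map_image_subset_topspace[OF g] a(2) by blast
      ultimately show "the_elem (g ` c) \<in> topspace Y" by simp
    qed
  next
    fix U assume U: "openin Y U"
    let ?V = "{c \<in> topspace (quotient_topology X R). the_elem (g ` c) \<in> U}"
    have "\<Union>?V = {a \<in> topspace X. g a \<in> U}"
    proof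
      show "\<Union>?V \<subseteq> {a \<in> topspace X. g a \<in> U}"
      proof
        fix a assume "a \<in> \<Union>?V"
        then obtain c where c: "c \<in> topspace X // R" "a \<in> c" "the_elem (g ` c) \<in> U"
          using qt_topspace[OF eqv] by auto
        have "g a \<in> U" using val[OF c(1,2)] c(3) by simp
        thus "a \<in> {a \<in> topspace X. g a \<in> U}" using qt_class_eq(2)[OF eqv c(1,2)] by simp
      qed
      show "{a \<in> topspace X. g a \<in> U} \<subseteq> \<Union>?V"
      proof
        fix a assume a: "a \<in> {a \<in> topspace X. g a \<in> U}"
        have c: "R``{a} \<in> topspace X // R" using a by (auto intro: quotientI)
        have "a \<in> R``{a}" using a equiv_class_self[OF eqv] by auto
        hence "the_elem (g ` (R``{a})) = g a" by (rule val[OF c])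
        hence "R``{a} \<in> ?V" using c a qt_topspace[OF eqv] by simp
        thus "a \<in> \<Union>?V" using \<open>a \<in> R``{a}\<close> by blast
      qed
    qed
    moreover have "openin X {a \<in> topspace X. g a \<in> U}" using g U unfolding continuous_map_def by blast
    moreover have "?V \<subseteq> topspace X // R" using qt_topspace[OF eqv] by auto
    ultimately show "openin (quotient_topology X R) ?V" using qt_open[OF eqv] by simp
  qed
qed

lemma qt_val:
  assumes eqv: "equiv (topspace X) R" and cst: "\<And>a b. (a, b) \<in> R \<Longrightarrow> g a = g b"
    and c: "c \<in> topspace X // R" and a: "a \<in> c"
  shows "the_elem (g ` c) = g a"
proof -
  have ca: "c = R``{a}" using qt_class_eq[OF eqv c a] by simp
  have "g ` c = {g a}"
  proof
    show "g ` c \<subseteq> {g a}"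
    proof
      fix z assume "z \<in> g ` c"
      then obtain b where b: "b \<in> c" "z = g b" by blast
      have "(a, b) \<in> R" using b(1) ca by simp
      from cst[OF this] show "z \<in> {g a}" using b(2) by simp
    qed
    show "{g a} \<subseteq> g ` c" using a by blast
  qed
  thus ?thesis by simp
qed

lemma equiv_join: "equiv (S \<times> {0..1} \<times> T) (join_rel S T)"
  unfolding equiv_def refl_on_def sym_def trans_def join_rel_def by auto

lemma join_map_cst: "(a, b) \<in> join_rel S T \<Longrightarrow> join_map a = join_map b"
  unfolding join_rel_def join_map_def by auto

definition joinable :: "'b::real_vector set \<Rightarrow> 'b set \<Rightarrow> bool" where
  "joinable S T \<longleftrightarrow> (\<forall>x\<in>S. \<forall>y\<in>T. \<forall>x'\<in>S. \<forall>y'\<in>T. \<forall>t s.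
      (1 - t) *\<^sub>R x + t *\<^sub>R y = (1 - s) *\<^sub>R x' + s *\<^sub>R y' \<longrightarrow> t = s \<and> (t \<noteq> 0 \<longrightarrow> y = y') \<and> (t \<noteq> 1 \<longrightarrow> x = x'))"

lemma joinableD:
  assumes "joinable S T" "x \<in> S" "y \<in> T" "x' \<in> S" "y' \<in> T" "(1 - t) *\<^sub>R x + t *\<^sub>R y = (1 - s) *\<^sub>R x' + s *\<^sub>R y'"
  shows "t = s \<and> (t \<noteq> 0 \<longrightarrow> y = y') \<and> (t \<noteq> 1 \<longrightarrow> x = x')"
  using assms unfolding joinable_def by blast

lemma seg_part:
  fixes S T :: "'b::real_vector set"
  assumes KK: "joinable S T"
    and xy: "x \<in> S" "y \<in> T" "x' \<in> S" "y' \<in> T" "(x, y) \<noteq> (x', y')"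
    and z: "z \<in> closed_segment x y" "z \<in> closed_segment x' y'"
  shows "z \<in> {x, y}"
proof -
  obtain t where t: "z = (1 - t) *\<^sub>R x + t *\<^sub>R y" using z(1) unfolding closed_segment_def by blast
  obtain s where s: "z = (1 - s) *\<^sub>R x' + s *\<^sub>R y'" using z(2) unfolding closed_segment_def by blast
  have "(1 - t) *\<^sub>R x + t *\<^sub>R y = (1 - s) *\<^sub>R x' + s *\<^sub>R y'" using t s by simp
  from joinableD[OF KK xy(1-4) this] have k: "t = s \<and> (t \<noteq> 0 \<longrightarrow> y = y') \<and> (t \<noteq> 1 \<longrightarrow> x = x')" .
  show ?thesis
  proof (cases "t = 0")
    case True thus ?thesis using t by simp
  next
    case False
    show ?thesis
    proof (cases "t = 1")
      case True thus ?thesis using t by simp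
    next
      case False
      thus ?thesis using k \<open>t \<noteq> 0\<close> xy(5) by simp
    qed
  qed
qed

lemma join_homeo:
  fixes S T :: "'b::real_normed_vector set"
  assumes cS: "compact S" and cT: "compact T"
    and KK: "joinable S T"
  shows "homeomorphic_map (join_topology S T)
            (top_of_set (\<Union>{closed_segment x y | x y. x \<in> S \<and> y \<in> T})) (\<lambda>c. the_elem (join_map ` c))"
proof -
  define D where "D = S \<times> {0..1::real} \<times> T"
  define R where "R = join_rel S T"
  define X where "X = top_of_set D"
  define B where "B = \<Union>{closed_segment x y | x y. x \<in> S \<and> y \<in> T}"
  have tX: "topspace X = D" by (simp add: X_def)
  have eqv: "equiv (topspace X) R" using equiv_join[of S T] by (simp add: tX D_def R_def)
  have Q: "join_topology S T = quotient_topology X R" by (simp add: join_topology_def X_def D_def R_def)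
  have cst: "\<And>a b. (a, b) \<in> R \<Longrightarrow> join_map a = join_map b" using join_map_cst by (auto simp: R_def)
  have jm: "join_map = (\<lambda>p. (1 - fst (snd p)) *\<^sub>R fst p + fst (snd p) *\<^sub>R snd (snd p))"
    by (auto simp: join_map_def fun_eq_iff split: prod.splits)
  have jmB: "join_map a \<in> B" if aD: "a \<in> D" for a
  proof -
    obtain x t y where a: "a = (x, t, y)" "x \<in> S" "t \<in> {0..1}" "y \<in> T" using aD by (cases a) (auto simp: D_def)
    have "join_map a \<in> closed_segment x y" using a unfolding closed_segment_def join_map_def by auto
    thus ?thesis using a by (auto simp: B_def)
  qed
  have contj: "continuous_map X (top_of_set B) join_map"
  proof (rule continuous_map_into_subtopology)
    show "continuous_map X euclidean join_map" unfolding X_def continuous_map_iff_continuous jm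
      by (intro continuous_intros)
    show "join_map \<in> topspace X \<rightarrow> B" using jmB tX by auto
  qed
  have contF: "continuous_map (quotient_topology X R) (top_of_set B) (\<lambda>c. the_elem (join_map ` c))"
    by (rule qt_univ[OF eqv contj cst])
  have cX: "compact_space X"
  proof -
    have "compact D" unfolding D_def using cS cT by (intro compact_Times compact_Icc)
    thus ?thesis using compact_space_subtopology[of euclidean D] by (simp add: X_def)
  qed
  have cQ: "compact_space (quotient_topology X R)" by (rule qt_compact[OF eqv cX])
  have hB: "Hausdorff_space (top_of_set B)" by (rule Hausdorff_space_subtopology) simp
  have tQ: "topspace (quotient_topology X R) = D // R" using qt_topspace[OF eqv] tX by simp
  have valD: "the_elem (join_map ` (R``{a})) = join_map a" if "a \<in> D" for a
  proof -
    have c: "R``{a} \<in> topspace X // R" using that tX by (simp add: quotientI)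
    have "a \<in> R``{a}" using equiv_class_self[OF eqv] that tX by simp
    from qt_val[OF eqv cst c this] show ?thesis .
  qed
  have img: "(\<lambda>c. the_elem (join_map ` c)) ` topspace (quotient_topology X R) = topspace (top_of_set B)"
  proof
    show "(\<lambda>c. the_elem (join_map ` c)) ` topspace (quotient_topology X R) \<subseteq> topspace (top_of_set B)"
      using contF continuous_map_image_subset_topspace by blast
    show "topspace (top_of_set B) \<subseteq> (\<lambda>c. the_elem (join_map ` c)) ` topspace (quotient_topology X R)"
    proof
      fix z assume "z \<in> topspace (top_of_set B)"
      then obtain x y where xy: "x \<in> S" "y \<in> T" "z \<in> closed_segment x y" by (auto simp: B_def)
      then obtain t where t: "0 \<le> t" "t \<le> 1" "z = (1 - t) *\<^sub>R x + t *\<^sub>R y" unfolding closed_segment_def by blast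
      have aD: "(x, t, y) \<in> D" using xy t by (simp add: D_def)
      have "z = the_elem (join_map ` (R``{(x, t, y)}))" using valD[OF aD] t by (simp add: join_map_def)
      moreover have "R``{(x, t, y)} \<in> topspace (quotient_topology X R)" using tQ aD by (simp add: quotientI)
      ultimately show "z \<in> (\<lambda>c. the_elem (join_map ` c)) ` topspace (quotient_topology X R)" by blast
    qed
  qed
  have inj: "inj_on (\<lambda>c. the_elem (join_map ` c)) (topspace (quotient_topology X R))"
  proof (rule inj_onI)
    fix c1 c2 assume c1: "c1 \<in> topspace (quotient_topology X R)" and c2: "c2 \<in> topspace (quotient_topology X R)"
      and e: "the_elem (join_map ` c1) = the_elem (join_map ` c2)"
    obtain a where a: "c1 = R``{a}" "a \<in> D" using c1 tQ by (auto elim: quotientE)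
    obtain b where b: "c2 = R``{b}" "b \<in> D" using c2 tQ by (auto elim: quotientE)
    have jab: "join_map a = join_map b" using e valD[OF a(2)] valD[OF b(2)] a b by simp
    obtain x t y where xa: "a = (x, t, y)" "x \<in> S" "t \<in> {0..1}" "y \<in> T" using a(2) by (cases a) (auto simp: D_def)
    obtain x' s y' where xb: "b = (x', s, y')" "x' \<in> S" "s \<in> {0..1}" "y' \<in> T" using b(2) by (cases b) (auto simp: D_def)
    have "(1 - t) *\<^sub>R x + t *\<^sub>R y = (1 - s) *\<^sub>R x' + s *\<^sub>R y'" using jab xa xb by (simp add: join_map_def)
    from joinableD[OF KK xa(2,4) xb(2,4) this] have k: "t = s \<and> (t \<noteq> 0 \<longrightarrow> y = y') \<and> (t \<noteq> 1 \<longrightarrow> x = x')" .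
    have "(a, b) \<in> R" unfolding R_def join_rel_def using xa xb k by auto
    thus "c1 = c2" using a b equiv_class_eq_iff[OF eqv] by metis
  qed
  have "homeomorphic_map (quotient_topology X R) (top_of_set B) (\<lambda>c. the_elem (join_map ` c))"
    by (rule continuous_imp_homeomorphic_map[OF contF cQ hB img inj])
  thus ?thesis by (simp add: Q B_def)
qed

theorem lemma5p3:
  fixes br :: "'a::euclidean_space \<Rightarrow> 'a \<Rightarrow> 'a"
    and AA :: "('a \<Rightarrow>\<^sub>L 'a) set"
    and h :: "'a set"
    and fs :: "'a set list"
    and Bf :: "'a set \<Rightarrow> ('a \<Rightarrow>\<^sub>L 'a) set"
  assumes "lie_bracket br" and "ad_invariant_inner br"
    and "subalgebra br h" and "h \<noteq> UNIV"
    and "aut_group br AA h"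
    and "is_flag br AA h fs" and "length fs > 1" and "UNIV \<notin> set fs"
    and "Bf = Xset br AA \<or> Bf = Dset br AA"
  shows "(\<forall>x\<in>Bf (hd fs). \<forall>y\<in>flag_simplex (tl fs). \<forall>x'\<in>Bf (hd fs). \<forall>y'\<in>flag_simplex (tl fs).
            (x, y) \<noteq> (x', y') \<longrightarrow>
            closed_segment x y \<inter> closed_segment x' y' \<subseteq> {x, y} \<inter> {x', y'})
       \<and> homeomorphic_map (join_topology (Bf (hd fs)) (flag_simplex (tl fs)))
            (top_of_set (butterfly Bf fs)) (\<lambda>c. the_elem (join_map ` c))"
proof -
  have bil: "bilinear br" using assms(1) by (simp add: lie_bracket_def)
  obtain f1 ts where fs: "fs = f1 # ts" using assms(7) by (cases fs) auto
  have flag: "\<forall>k\<in>set fs. subalgebra br k \<and> AA_invariant AA k \<and> h \<subset> k" "sorted_wrt (\<lambda>a b. b \<subset> a) fs"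
    using assms(6) by (auto simp: is_flag_def)
  have f1: "subspace f1" using flag(1) fs by (auto simp: subalgebra_def)
  have srt: "sorted_wrt (\<lambda>a b. b \<subset> a) ts" using flag(2) fs by simp
  have ts: "\<forall>k\<in>set ts. subspace k \<and> k \<subset> f1" using flag fs by (auto simp: subalgebra_def)
  define S where "S = Bf f1"
  define T where "T = flag_simplex ts"
  have SD: "S \<subseteq> Dset br AA f1" using assms(9) by (auto simp: S_def Xset_def)
  have S0: "\<forall>p\<in>f1. x p = 0" if "x \<in> S" for x using SD that unfolding Dset_def by blast
  from assms(9) have cS: "compact S"
  proof
    assume "Bf = Xset br AA" thus ?thesis using compact_Xset[OF bil, of AA f1] by (simp add: S_def)
  next
    assume "Bf = Dset br AA" thus ?thesis using compact_Dset[OF bil, of AA f1] by (simp add: S_def)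
  qed
  have cT: "compact T" unfolding T_def flag_simplex_def by (intro finite_imp_compact_convex_hull) simp
  have K: "joinable S T" unfolding joinable_def
  proof (intro ballI allI impI)
    fix x y x' y' and t s :: real
    assume h: "x \<in> S" "y \<in> T" "x' \<in> S" "y' \<in> T" "(1 - t) *\<^sub>R x + t *\<^sub>R y = (1 - s) *\<^sub>R x' + s *\<^sub>R y'"
    have yT: "y \<in> flag_simplex ts" "y' \<in> flag_simplex ts" using h(2,4) by (simp_all add: T_def)
    show "t = s \<and> (t \<noteq> 0 \<longrightarrow> y = y') \<and> (t \<noteq> 1 \<longrightarrow> x = x')"
      by (rule join_key[OF srt ts f1 S0[OF h(1)] S0[OF h(3)] yT h(5)])
  qed
  have part1: "\<forall>x\<in>S. \<forall>y\<in>T. \<forall>x'\<in>S. \<forall>y'\<in>T. (x, y) \<noteq> (x', y') \<longrightarrow>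
            closed_segment x y \<inter> closed_segment x' y' \<subseteq> {x, y} \<inter> {x', y'}"
  proof (intro ballI impI subsetI)
    fix x y x' y' z assume xy: "x \<in> S" "y \<in> T" "x' \<in> S" "y' \<in> T" "(x, y) \<noteq> (x', y')"
      and z: "z \<in> closed_segment x y \<inter> closed_segment x' y'"
    have n: "(x', y') \<noteq> (x, y)" using xy(5) by metis
    have z1: "z \<in> closed_segment x y" "z \<in> closed_segment x' y'" using z by auto
    have "z \<in> {x, y}" by (rule seg_part[OF K xy z1])
    moreover have "z \<in> {x', y'}" by (rule seg_part[OF K xy(3,4,1,2) n z1(2) z1(1)])
    ultimately show "z \<in> {x, y} \<inter> {x', y'}" by blast
  qed
  have part2: "homeomorphic_map (join_topology S T)
            (top_of_set (\<Union>{closed_segment x y | x y. x \<in> S \<and> y \<in> T})) (\<lambda>c. the_elem (join_map ` c))"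
    by (rule join_homeo[OF cS cT K])
  have bf: "butterfly Bf fs = \<Union>{closed_segment x y | x y. x \<in> S \<and> y \<in> T}"
    by (simp add: butterfly_def fs S_def T_def)
  have hf: "hd fs = f1" "tl fs = ts" by (simp_all add: fs)
  show ?thesis unfolding bf hf using part1 part2 unfolding S_def T_def by blast
qed

end
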